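(* Let $X_0,Y_0$ be random vectors in $\mathbb R^p$ that are absolutely continuous w.r.t. Lebesgue measure, and let $f:\mathbb R^p\to\mathbb R^n$ be $L$-Lipschitz. Let $\Sigma\in\mathbb R^{n\times n}$ be positive definite, and let $X_1,Y_1$ be random vectors in $\mathbb R^n$ with $X_1\mid X_0\sim N(f(X_0),\Sigma)$ and $Y_1\mid Y_0\sim N(f(Y_0),\Sigma)$. Then $$\|\mathsf P_{X_1}-\mathsf P_{Y_1}\|_{\mathsf{TV}}\le\frac{L\sqrt{\mathrm{tr}(\Sigma^{-1})}}{2}W_1(\mathsf P_{X_0},\mathsf P_{Y_0}).$$
   Context: $\mathsf P_Z$ denotes the law of $Z$. $\|\mu-\nu\|_{\mathsf{TV}}=\sup_A|\mu(A)-\nu(A)|$. The $1$-Wasserstein distance is $W_1(\mu,\nu)=\inf\{\mathbb{E}\|X-Y\|_2:(X,Y)\text{ a coupling of }(\mu,\nu)\}$. *)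

theory Defs
  imports "HOL-Probability.Probability"
begin

definition pos_def_mat :: "real^'n^'n \<Rightarrow> bool" where
  "pos_def_mat S \<longleftrightarrow> transpose S = S \<and> (\<forall>x. x \<noteq> 0 \<longrightarrow> x \<bullet> (S *v x) > 0)"

definition gaussian_vec :: "real^'n \<Rightarrow> real^'n^'n \<Rightarrow> (real^'n) measure" where
  "gaussian_vec m S = density lborel (\<lambda>y. ennreal
     ((2 * pi) powr (- real CARD('n) / 2) * (det S) powr (-1/2)
      * exp (- (1/2) * ((y - m) \<bullet> (matrix_inv S *v (y - m))))))"

definition tv_dist :: "'a measure \<Rightarrow> 'a measure \<Rightarrow> real" where
  "tv_dist \<mu> \<nu> = (SUP A \<in> sets \<mu>. \<bar>measure \<mu> A - measure \<nu> A\<bar>)"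

definition couplings :: "('a::real_normed_vector) measure \<Rightarrow> 'a measure \<Rightarrow> ('a \<times> 'a) measure set" where
  "couplings \<mu> \<nu> = {\<gamma>. prob_space \<gamma> \<and> sets \<gamma> = sets (borel \<Otimes>\<^sub>M borel)
      \<and> distr \<gamma> borel fst = \<mu> \<and> distr \<gamma> borel snd = \<nu>}"

definition wasserstein1 :: "('a::real_normed_vector) measure \<Rightarrow> 'a measure \<Rightarrow> ennreal" where
  "wasserstein1 \<mu> \<nu> = (INF \<gamma> \<in> couplings \<mu> \<nu>. \<integral>\<^sup>+ z. ennreal (norm (fst z - snd z)) \<partial>\<gamma>)"

end

theory Submission imports Defs begin


lemma pd_inv:
  fixes S :: "real^'n^'n"
  assumes "pos_def_mat S"
  shows "S ** matrix_inv S = mat 1" "matrix_inv S ** S = mat 1"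
proof -
  have inj: "inj ((*v) S)"
  proof (rule injI)
    fix x y assume "S *v x = S *v y"
    hence "S *v (x - y) = 0" by (simp add: matrix_vector_mult_diff_distrib)
    hence "(x - y) \<bullet> (S *v (x - y)) = 0" by simp
    thus "x = y" using assms unfolding pos_def_mat_def by (metis less_irrefl right_minus_eq)
  qed
  then obtain B where "B ** S = mat 1" using matrix_left_invertible_injective by blast
  hence ex: "\<exists>A'. S ** A' = mat 1 \<and> A' ** S = mat 1"
    using matrix_left_right_inverse by blast
  show "S ** matrix_inv S = mat 1" "matrix_inv S ** S = mat 1"
    using someI_ex[OF ex] unfolding matrix_inv_def by auto
qed

lemma pd_inv_sym:
  fixes S :: "real^'n^'n"
  assumes "pos_def_mat S"
  shows "transpose (matrix_inv S) = matrix_inv S"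
proof -
  let ?T = "matrix_inv S"
  have st: "transpose S = S" using assms unfolding pos_def_mat_def by simp
  have "transpose ?T ** S = mat 1"
    using arg_cong[OF pd_inv(1)[OF assms], of transpose] by (simp add: matrix_transpose_mul st transpose_mat)
  hence "transpose ?T = transpose ?T ** (S ** ?T)" using pd_inv(1)[OF assms] by simp
  also have "\<dots> = ?T" using \<open>transpose ?T ** S = mat 1\<close> by (simp add: matrix_mul_assoc)
  finally show ?thesis .
qed

lemma sym_inner:
  fixes A :: "real^'n^'n"
  assumes "transpose A = A"
  shows "u \<bullet> (A *v v) = v \<bullet> (A *v u)"
  by (metis assms dot_lmul_matrix inner_commute vector_transpose_matrix)

lemma pd_inv_psd:
  fixes S :: "real^'n^'n"
  assumes "pos_def_mat S"
  shows "x \<bullet> (matrix_inv S *v x) \<ge> 0"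
proof -
  let ?w = "matrix_inv S *v x"
  have "x = S *v ?w" using pd_inv(1)[OF assms] by (simp add: matrix_vector_mul_assoc)
  hence "x \<bullet> ?w = ?w \<bullet> (S *v ?w)" by (metis inner_commute)
  also have "\<dots> \<ge> 0" using assms unfolding pos_def_mat_def
    by (cases "?w = 0") (auto intro: less_imp_le)
  finally show ?thesis .
qed

lemma psd_cs:
  fixes A :: "real^'n^'n"
  assumes sym: "transpose A = A" and psd: "\<And>x. x \<bullet> (A *v x) \<ge> 0"
  shows "(u \<bullet> (A *v v))^2 \<le> (u \<bullet> (A *v u)) * (v \<bullet> (A *v v))"
proof -
  define a where "a = v \<bullet> (A *v v)"
  define b where "b = u \<bullet> (A *v v)"
  define c where "c = u \<bullet> (A *v u)"
  have q: "0 \<le> c + 2 * t * b + t^2 * a" for t :: real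
  proof -
    have "0 \<le> (u + t *\<^sub>R v) \<bullet> (A *v (u + t *\<^sub>R v))" by (rule psd)
    also have "\<dots> = c + 2 * t * b + t^2 * a"
      using sym_inner[OF sym, of v u]
      by (simp add: a_def b_def c_def matrix_vector_right_distrib matrix_vector_mult_scaleR
          inner_add_left inner_add_right algebra_simps power2_eq_square)
    finally show ?thesis .
  qed
  have "a \<ge> 0" "c \<ge> 0" using psd by (auto simp: a_def c_def)
  show ?thesis
  proof (cases "a = 0")
    case True
    have "b = 0"
    proof (rule ccontr)
      assume "b \<noteq> 0"
      have "0 \<le> c + 2 * (-(c+1)/(2*b)) * b" using q[of "-(c+1)/(2*b)"] True by simp
      also have "\<dots> = -1" using \<open>b \<noteq> 0\<close> by (simp add: field_simps)
      finally show False by simp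
    qed
    thus ?thesis using True by (simp add: a_def[symmetric] b_def[symmetric] c_def[symmetric])
  next
    case False
    hence "a > 0" using \<open>a \<ge> 0\<close> by simp
    have "0 \<le> c + 2 * (-b/a) * b + (-b/a)^2 * a" by (rule q)
    also have "\<dots> = c - b^2 / a" using \<open>a > 0\<close> by (simp add: field_simps power2_eq_square)
    finally have "b^2 \<le> c * a" using \<open>a > 0\<close> by (simp add: field_simps)
    thus ?thesis by (simp add: a_def[symmetric] b_def[symmetric] c_def[symmetric])
  qed
qed

lemma psd_trace_bound:
  fixes A :: "real^'n^'n"
  assumes sym: "transpose A = A" and psd: "\<And>x. x \<bullet> (A *v x) \<ge> 0"
  shows "d \<bullet> (A *v d) \<le> trace A * (norm d)^2"
proof -
  define q where "q = d \<bullet> (A *v d)"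
  define w where "w = A *v d"
  have q0: "q \<ge> 0" using psd by (simp add: q_def)
  have diag: "axis i 1 \<bullet> (A *v axis i 1) = A $ i $ i" for i
    by (simp add: inner_axis' matrix_vector_mult_basis column_def)
  have tr0: "trace A \<ge> 0" unfolding trace_def by (rule sum_nonneg) (metis diag psd)
  have wi: "(w $ i)^2 \<le> A $ i $ i * q" for i
    using psd_cs[OF sym psd, of "axis i 1" d] by (simp add: diag q_def w_def inner_axis' matrix_vector_mult_basis column_def)
  have "(norm w)^2 = (\<Sum>i\<in>UNIV. (w $ i)^2)"
    unfolding power2_norm_eq_inner inner_vec_def by (simp add: power2_eq_square)
  also have "\<dots> \<le> (\<Sum>i\<in>UNIV. A $ i $ i * q)" by (rule sum_mono) (rule wi)
  also have "\<dots> = trace A * q" by (simp add: trace_def sum_distrib_right)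
  finally have nw: "(norm w)^2 \<le> trace A * q" .
  have "q \<le> norm d * norm w" unfolding q_def w_def by (rule order_trans[OF abs_ge_self Cauchy_Schwarz_ineq2])
  hence "q^2 \<le> (norm d)^2 * (norm w)^2"
    using power_mono[OF \<open>q \<le> norm d * norm w\<close> q0, of 2] by (simp add: power_mult_distrib)
  also have "\<dots> \<le> (norm d)^2 * (trace A * q)" using nw by (simp add: mult_left_mono)
  finally have "q^2 \<le> (trace A * (norm d)^2) * q" by (simp add: ac_simps)
  thus ?thesis
  proof (cases "q = 0")
    case True thus ?thesis using tr0 by (simp add: q_def)
  next
    case False
    with q0 have "q > 0" by simp
    with \<open>q^2 \<le> (trace A * (norm d)^2) * q\<close> show ?thesis
      by (simp add: q_def[symmetric] power2_eq_square)
  qed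
qed

lemma pd_inv_trace_nonneg:
  fixes S :: "real^'n^'n"
  assumes "pos_def_mat S"
  shows "trace (matrix_inv S) \<ge> 0"
proof -
  have "axis i 1 \<bullet> (matrix_inv S *v axis i 1) = matrix_inv S $ i $ i" for i
    by (simp add: inner_axis' matrix_vector_mult_basis column_def)
  thus ?thesis unfolding trace_def by (intro sum_nonneg) (metis pd_inv_psd[OF assms])
qed




definition gd :: "real^'n^'n \<Rightarrow> real^'n \<Rightarrow> real" where
  "gd S z = (2 * pi) powr (- real CARD('n) / 2) * (det S) powr (-1/2)
      * exp (- (1/2) * (z \<bullet> (matrix_inv S *v z)))"

lemma gv_eq: "gaussian_vec m S = density lborel (\<lambda>y. ennreal (gd S (y - m)))"
  by (simp add: gaussian_vec_def gd_def)

lemma gd_nonneg: "gd S z \<ge> 0"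
  by (simp add: gd_def)

lemma gd_cont: "continuous_on UNIV (gd S)"
proof -
  have "continuous_on UNIV (\<lambda>z. (matrix_inv S *v z))"
    by (rule linear_continuous_on) (simp add: linear_conv_bounded_linear[symmetric] matrix_vector_mul_linear)
  then show ?thesis unfolding gd_def by (intro continuous_intros) auto
qed

lemma gd_meas[measurable]: "gd S \<in> borel_measurable borel"
  by (rule borel_measurable_continuous_onI[OF gd_cont])

lemma gd_shift: "(\<integral>\<^sup>+ y. ennreal (gd S (y - m)) \<partial>lborel) = (\<integral>\<^sup>+ y. ennreal (gd S y) \<partial>lborel)"
proof -
  have "(\<integral>\<^sup>+ y. ennreal (gd S y) \<partial>lborel) = (\<integral>\<^sup>+ y. ennreal (gd S y) \<partial>distr lborel borel ((+) (-m)))"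
    by (simp add: lborel_distr_plus)
  also have "\<dots> = (\<integral>\<^sup>+ y. ennreal (gd S (-m + y)) \<partial>lborel)"
    by (subst nn_integral_distr) auto
  finally show ?thesis by simp
qed

lemma gv_space: "emeasure (gaussian_vec m S) UNIV = (\<integral>\<^sup>+ y. ennreal (gd S y) \<partial>lborel)"
  unfolding gv_eq by (subst emeasure_density) (auto simp: gd_shift)

lemma sets_gv[simp, measurable_cong]: "sets (gaussian_vec m S) = sets borel"
  by (simp add: gv_eq)

lemma space_gv[simp]: "space (gaussian_vec m S) = UNIV"
  by (simp add: gv_eq)

lemma real_tv_aux:
  fixes x y e :: real
  assumes "0 \<le> x" "x \<le> 1" "0 \<le> y" "y \<le> 1" "0 \<le> e"
    and "e \<le> sqrt (x*y) + sqrt ((1-x)*(1-y))"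
  shows "(x - y)^2 \<le> 1 - e^2"
proof -
  define u where "u = x*(1-x)" define v where "v = y*(1-y)"
  have u0: "u \<ge> 0" "v \<ge> 0" using assms by (auto simp: u_def v_def)
  have "e^2 \<le> (sqrt (x*y) + sqrt ((1-x)*(1-y)))^2"
    using assms by (intro power_mono) auto
  also have "\<dots> = x*y + (1-x)*(1-y) + 2 * sqrt (u * v)"
  proof -
    have a: "(sqrt ((1-x) * (1-y)))^2 = (1-x) * (1-y)" "(sqrt (x * y))^2 = x * y" using assms by auto
    have b: "sqrt (x * y) * sqrt ((1 - x) * (1 - y)) = sqrt (u * v)"
      by (simp add: u_def v_def real_sqrt_mult[symmetric] algebra_simps)
    show ?thesis unfolding power2_sum a by (simp add: mult.assoc b)
  qed
  also have "2 * sqrt (u * v) \<le> u + v"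
  proof -
    have "(sqrt u - sqrt v)^2 \<ge> 0" by simp
    thus ?thesis using u0 by (simp add: power2_diff real_sqrt_mult)
  qed
  hence "x*y + (1-x)*(1-y) + 2 * sqrt (u * v) \<le> x*y + (1-x)*(1-y) + u + v" by simp
  also have "\<dots> = 1 - (x-y)^2" by (simp add: u_def v_def power2_eq_square algebra_simps)
  finally show ?thesis by simp
qed




lemma qf_par:
  fixes T :: "real^'n^'n"
  shows "(y - a) \<bullet> (T *v (y - a)) + (y - b) \<bullet> (T *v (y - b))
     = 2 * ((y - (1/2) *\<^sub>R (a + b)) \<bullet> (T *v (y - (1/2) *\<^sub>R (a + b)))) + ((a - b) \<bullet> (T *v (a - b))) / 2"
  by (simp add: matrix_vector_right_distrib matrix_vector_mult_diff_distrib matrix_vector_mult_scaleR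
      inner_add_left inner_add_right inner_diff_left inner_diff_right algebra_simps; simp add: field_simps)

lemma gd_bc:
  fixes S :: "real^'n^'n"
  shows "sqrt (gd S (y - a) * gd S (y - b)) =
    exp (- ((a - b) \<bullet> (matrix_inv S *v (a - b))) / 8) * gd S (y - (1/2) *\<^sub>R (a + b))"
proof -
  define C where "C = (2 * pi) powr (- real CARD('n) / 2) * (det S) powr (-1/2)"
  define T where "T = matrix_inv S"
  have C0: "C \<ge> 0" by (simp add: C_def)
  define Q where "Q = (y - (1/2) *\<^sub>R (a + b)) \<bullet> (T *v (y - (1/2) *\<^sub>R (a + b)))"
  define R where "R = (a - b) \<bullet> (T *v (a - b))"
  have gd': "gd S z = C * exp (- (1/2) * (z \<bullet> (T *v z)))" for z by (simp add: gd_def C_def T_def)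
  have "gd S (y - a) * gd S (y - b) = C^2 * exp (- (1/2) * ((y - a) \<bullet> (T *v (y - a)) + (y - b) \<bullet> (T *v (y - b))))"
    by (simp add: gd' power2_eq_square exp_add[symmetric] algebra_simps)
  also have "\<dots> = (C * exp (- (1/2) * Q) * exp (- R / 8))^2"
    unfolding qf_par Q_def[symmetric] R_def[symmetric]
    by (simp add: power_mult_distrib exp_add[symmetric] exp_double[symmetric] power2_eq_square algebra_simps)
  finally have "sqrt (gd S (y - a) * gd S (y - b)) = C * exp (- (1/2) * Q) * exp (- R / 8)"
    using C0 by simp
  thus ?thesis by (simp add: gd' Q_def R_def T_def)
qed




lemma gv_emeasure:
  assumes "B \<in> sets borel"
  shows "emeasure (gaussian_vec m S) B = (\<integral>\<^sup>+ z. ennreal (gd S (z - m)) * indicator B z \<partial>lborel)"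
  using assms by (simp add: gv_eq emeasure_density)

lemma gv_prob:
  assumes Z: "(\<integral>\<^sup>+ y. ennreal (gd S y) \<partial>lborel) = 1"
  shows "prob_space (gaussian_vec m S)"
  by (rule prob_spaceI) (simp add: gv_space Z)

lemma gv_cs:
  fixes S :: "real^'n^'n"
  assumes Z: "(\<integral>\<^sup>+ y. ennreal (gd S y) \<partial>lborel) = 1" and B: "B \<in> sets borel"
  shows "(\<integral>\<^sup>+ z. ennreal (sqrt (gd S (z - a) * gd S (z - b))) * indicator B z \<partial>lborel)
     \<le> ennreal (sqrt (measure (gaussian_vec a S) B * measure (gaussian_vec b S) B))"
proof -
  interpret pa: prob_space "gaussian_vec a S" by (rule gv_prob[OF Z])
  interpret pb: prob_space "gaussian_vec b S" by (rule gv_prob[OF Z])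
  define I where "I = (\<integral>\<^sup>+ z. ennreal (sqrt (gd S (z - a) * gd S (z - b))) * indicator B z \<partial>lborel)"
  define f where "f = (\<lambda>z. ennreal (sqrt (gd S (z - a))) * indicator B z)"
  define g where "g = (\<lambda>z. ennreal (sqrt (gd S (z - b))) * indicator B z)"
  have [measurable]: "f \<in> borel_measurable lborel" "g \<in> borel_measurable lborel"
    using B by (auto simp: f_def g_def)
  have fg: "f z * g z = ennreal (sqrt (gd S (z - a) * gd S (z - b))) * indicator B z" for z
    by (auto simp: f_def g_def indicator_def real_sqrt_mult ennreal_mult[symmetric] gd_nonneg)
  have f2: "f z ^ 2 = ennreal (gd S (z - a)) * indicator B z" for z
    by (auto simp: f_def indicator_def ennreal_power gd_nonneg)
  have g2: "g z ^ 2 = ennreal (gd S (z - b)) * indicator B z" for z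
    by (auto simp: g_def indicator_def ennreal_power gd_nonneg)
  have "I ^ 2 \<le> (\<integral>\<^sup>+ z. f z ^ 2 \<partial>lborel) * (\<integral>\<^sup>+ z. g z ^ 2 \<partial>lborel)"
    using Cauchy_Schwarz_nn_integral[of f lborel g] unfolding I_def fg by simp
  also have "\<dots> = emeasure (gaussian_vec a S) B * emeasure (gaussian_vec b S) B"
    unfolding f2 g2 using B by (simp add: gv_emeasure)
  also have "\<dots> = ennreal (sqrt (measure (gaussian_vec a S) B * measure (gaussian_vec b S) B)) ^ 2"
    by (simp add: pa.emeasure_eq_measure pb.emeasure_eq_measure ennreal_mult[symmetric] ennreal_power)
  finally have I2: "I ^ 2 \<le> ennreal (sqrt (measure (gaussian_vec a S) B * measure (gaussian_vec b S) B)) ^ 2" .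
  have "I \<le> ennreal (sqrt (measure (gaussian_vec a S) B * measure (gaussian_vec b S) B))"
  proof (cases I)
    case (real i)
    define s where "s = sqrt (measure (gaussian_vec a S) B * measure (gaussian_vec b S) B)"
    have s0: "s \<ge> 0" by (simp add: s_def)
    from I2 real have "ennreal (i ^ 2) \<le> ennreal (s ^ 2)"
      by (simp add: ennreal_power s_def[symmetric] s0)
    hence "i ^ 2 \<le> s ^ 2" by (subst (asm) ennreal_le_iff) auto
    hence "i \<le> s" using s0 by (rule power2_le_imp_le)
    thus ?thesis using real by (simp add: s_def)
  qed (use I2 in \<open>simp add: ennreal_power top_unique\<close>)
  thus ?thesis by (simp add: I_def)
qed

lemma gauss_tv:
  fixes S :: "real^'n^'n"
  assumes pd: "pos_def_mat S" and Z: "(\<integral>\<^sup>+ y. ennreal (gd S y) \<partial>lborel) = 1"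
    and A: "A \<in> sets borel"
  shows "\<bar>measure (gaussian_vec a S) A - measure (gaussian_vec b S) A\<bar>
           \<le> sqrt (trace (matrix_inv S)) / 2 * norm (a - b)"
proof -
  interpret pa: prob_space "gaussian_vec a S" by (rule gv_prob[OF Z])
  interpret pb: prob_space "gaussian_vec b S" by (rule gv_prob[OF Z])
  define x where "x = measure (gaussian_vec a S) A"
  define y where "y = measure (gaussian_vec b S) A"
  define R where "R = (a - b) \<bullet> (matrix_inv S *v (a - b))"
  define e where "e = exp (- R / 8)"
  define m where "m = (1/2) *\<^sub>R (a + b)"
  define h where "h = (\<lambda>z. sqrt (gd S (z - a) * gd S (z - b)))"
  have hm[measurable]: "h \<in> borel_measurable borel" unfolding h_def by measurable
  have Ac: "- A \<in> sets borel" using A by auto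
  have xc: "measure (gaussian_vec a S) (- A) = 1 - x"
    using pa.prob_compl[of A] A by (simp add: x_def Compl_eq_Diff_UNIV)
  have yc: "measure (gaussian_vec b S) (- A) = 1 - y"
    using pb.prob_compl[of A] A by (simp add: y_def Compl_eq_Diff_UNIV)
  have "(\<integral>\<^sup>+ z. ennreal (h z) \<partial>lborel) = (\<integral>\<^sup>+ z. ennreal e * ennreal (gd S (z - m)) \<partial>lborel)"
    by (intro nn_integral_cong) (simp add: h_def gd_bc e_def R_def m_def ennreal_mult[symmetric] gd_nonneg)
  also have "\<dots> = ennreal e * (\<integral>\<^sup>+ z. ennreal (gd S (z - m)) \<partial>lborel)"
    by (rule nn_integral_cmult) simp
  also have "\<dots> = ennreal e" by (simp add: gd_shift Z)
  finally have tot: "(\<integral>\<^sup>+ z. ennreal (h z) \<partial>lborel) = ennreal e" .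
  have "(\<integral>\<^sup>+ z. ennreal (h z) \<partial>lborel) =
      (\<integral>\<^sup>+ z. ennreal (h z) * indicator A z + ennreal (h z) * indicator (- A) z \<partial>lborel)"
    by (intro nn_integral_cong) (simp split: split_indicator)
  also have "\<dots> = (\<integral>\<^sup>+ z. ennreal (h z) * indicator A z \<partial>lborel) + (\<integral>\<^sup>+ z. ennreal (h z) * indicator (- A) z \<partial>lborel)"
    using A by (intro nn_integral_add) auto
  also have "\<dots> \<le> ennreal (sqrt (x * y)) + ennreal (sqrt ((1 - x) * (1 - y)))"
    using gv_cs[OF Z A, of a b] gv_cs[OF Z Ac, of a b] unfolding h_def x_def y_def xc yc
    by (intro add_mono) (auto simp: x_def y_def)
  also have "\<dots> = ennreal (sqrt (x * y) + sqrt ((1 - x) * (1 - y)))"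
    using pa.prob_le_1[of A] pb.prob_le_1[of A]
    by (intro ennreal_plus[symmetric]) (auto simp: x_def y_def)
  finally have "e \<le> sqrt (x * y) + sqrt ((1 - x) * (1 - y))"
    unfolding tot by (subst (asm) ennreal_le_iff) (auto simp: x_def y_def)
  hence "(x - y)^2 \<le> 1 - e^2"
    by (intro real_tv_aux) (auto simp: x_def y_def e_def)
  also have "e^2 = exp (- R / 4)" by (simp add: e_def power2_eq_square exp_add[symmetric])
  also have "1 - exp (- R / 4) \<le> R / 4" using exp_ge_add_one_self[of "- R / 4"] by simp
  finally have "(x - y)^2 \<le> R / 4" .
  hence "\<bar>x - y\<bar> \<le> sqrt (R / 4)" using real_sqrt_abs[of "x - y"] real_sqrt_le_mono by metis
  also have "sqrt (R / 4) = sqrt R / 2" by (simp add: real_sqrt_divide)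
  also have "R \<le> trace (matrix_inv S) * (norm (a - b))^2"
    unfolding R_def by (rule psd_trace_bound[OF pd_inv_sym[OF pd] pd_inv_psd[OF pd]])
  hence "sqrt R \<le> sqrt (trace (matrix_inv S)) * norm (a - b)"
    using real_sqrt_le_mono by (fastforce simp: real_sqrt_mult)
  finally show ?thesis by (simp add: x_def y_def divide_right_mono)
qed




lemma gv_emeasure_pair:
  fixes f :: "'a::topological_space \<Rightarrow> real^'n" and S :: "real^'n^'n"
  assumes B: "B \<in> sets (borel \<Otimes>\<^sub>M borel)"
  shows "emeasure (gaussian_vec (f x) S) (Pair x -` B) =
     (\<integral>\<^sup>+ z. ennreal (gd S (z - f x)) * indicator B (x, z) \<partial>lborel)"
proof -
  have "Pair x -` B \<in> sets borel" using B by (rule sets_Pair1)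
  hence "emeasure (gaussian_vec (f x) S) (Pair x -` B) =
     (\<integral>\<^sup>+ z. ennreal (gd S (z - f x)) * indicator (Pair x -` B) z \<partial>lborel)"
    by (rule gv_emeasure)
  also have "\<dots> = (\<integral>\<^sup>+ z. ennreal (gd S (z - f x)) * indicator B (x, z) \<partial>lborel)"
    by (simp add: indicator_def)
  finally show ?thesis .
qed

lemma gv_emeasure_pair_meas:
  fixes f :: "real^'p \<Rightarrow> real^'n" and S :: "real^'n^'n"
  assumes f[measurable]: "f \<in> borel_measurable borel" and B: "B \<in> sets (borel \<Otimes>\<^sub>M borel)"
  shows "(\<lambda>x. emeasure (gaussian_vec (f x) S) (Pair x -` B)) \<in> borel_measurable borel"
proof -
  have Bm: "B \<in> sets (borel \<Otimes>\<^sub>M lborel)" using B by simp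
  have "(\<lambda>(x, z). ennreal (gd S (z - f x)) * indicator B (x, z)) \<in> borel_measurable (borel \<Otimes>\<^sub>M lborel)"
    using Bm by measurable
  hence "(\<lambda>x. \<integral>\<^sup>+ z. ennreal (gd S (z - f x)) * indicator B (x, z) \<partial>lborel) \<in> borel_measurable borel"
    by (rule lborel.borel_measurable_nn_integral[of "\<lambda>x z. ennreal (gd S (z - f x)) * indicator B (x, z)"])
  thus ?thesis using gv_emeasure_pair[OF B] by simp
qed

lemma UNIV_pair_sets: "UNIV \<in> sets (borel \<Otimes>\<^sub>M borel)"
  by (metis sets.top space_pair_measure space_borel UNIV_Times_UNIV)

definition kern :: "(real^'p \<Rightarrow> real^'n) \<Rightarrow> real^'n^'n \<Rightarrow> real^'p \<Rightarrow> ((real^'p) \<times> (real^'n)) measure" where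
  "kern f S x = distr (gaussian_vec (f x) S) (borel \<Otimes>\<^sub>M borel) (\<lambda>y. (x, y))"

lemma kern_emeasure:
  assumes B: "B \<in> sets (borel \<Otimes>\<^sub>M borel)"
  shows "emeasure (kern f S x) B = emeasure (gaussian_vec (f x) S) (Pair x -` B)"
  unfolding kern_def using B by (subst emeasure_distr) (auto simp: measurable_cong_sets[OF sets_gv refl])

lemma kern_meas:
  fixes f :: "real^'p \<Rightarrow> real^'n" and S :: "real^'n^'n"
  assumes f[measurable]: "f \<in> borel_measurable borel"
    and Z: "(\<integral>\<^sup>+ y. ennreal (gd S y) \<partial>lborel) \<le> 1"
    and P: "sets P = sets borel"
  shows "kern f S \<in> measurable P (subprob_algebra (borel \<Otimes>\<^sub>M borel))"
proof (rule measurable_subprob_algebra)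
  fix x
  show "sets (kern f S x) = sets (borel \<Otimes>\<^sub>M borel)" by (simp add: kern_def)
  show "subprob_space (kern f S x)"
  proof
    have "emeasure (kern f S x) (space (kern f S x)) = emeasure (gaussian_vec (f x) S) UNIV"
      by (subst kern_emeasure) (auto simp: kern_def space_pair_measure UNIV_pair_sets)
    thus "emeasure (kern f S x) (space (kern f S x)) \<le> 1" using Z by (simp add: gv_space)
    show "space (kern f S x) \<noteq> {}" by (simp add: kern_def space_pair_measure)
  qed
next
  fix B :: "((real^'p) \<times> (real^'n)) set" assume B: "B \<in> sets (borel \<Otimes>\<^sub>M borel)"
  show "(\<lambda>x. emeasure (kern f S x) B) \<in> borel_measurable P"
    unfolding kern_emeasure[OF B] measurable_cong_sets[OF P refl]
    by (rule gv_emeasure_pair_meas[OF f B])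
qed




lemma distr_nonmeas_null:
  assumes "\<And>x. x \<in> space P \<Longrightarrow> K x \<notin> space SA"
  shows "distr P SA K = null_measure SA"
  unfolding distr_def null_measure_def
proof (rule measure_of_eq)
  show "sets SA \<subseteq> Pow (space SA)" by (rule sets.space_closed)
  fix a assume "a \<in> sigma_sets (space SA) (sets SA)"
  hence "a \<subseteq> space SA" by (simp add: sets.sigma_sets_eq sets.sets_into_space)
  hence "K -` a \<inter> space P = {}" using assms by auto
  thus "emeasure P (K -` a \<inter> space P) = 0" by simp
qed

lemma gauss_norm:
  fixes X0 :: "'w \<Rightarrow> real^'p" and X1 :: "'w \<Rightarrow> real^'n" and f :: "real^'p \<Rightarrow> real^'n"
    and S :: "real^'n^'n"
  assumes M: "prob_space M" and [measurable]: "X0 \<in> borel_measurable M" "X1 \<in> borel_measurable M"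
    and f[measurable]: "f \<in> borel_measurable borel"
    and hyp: "distr M (borel \<Otimes>\<^sub>M borel) (\<lambda>\<omega>. (X0 \<omega>, X1 \<omega>)) = bind (distr M borel X0) (kern f S)"
  shows "(\<integral>\<^sup>+ y. ennreal (gd S y) \<partial>lborel) = 1"
proof -
  define Z where "Z = (\<integral>\<^sup>+ y. ennreal (gd S y) \<partial>lborel)"
  define P where "P = distr M borel X0"
  interpret M: prob_space M by (rule M)
  have sP: "sets P = sets borel" "space P = UNIV" by (simp_all add: P_def)
  have PP: "prob_space P" unfolding P_def by (rule M.prob_space_distr) simp
  have "emeasure (distr M (borel \<Otimes>\<^sub>M borel) (\<lambda>\<omega>. (X0 \<omega>, X1 \<omega>))) UNIV = 1"
    by (subst emeasure_distr) (auto simp: UNIV_pair_sets M.emeasure_space_1)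
  hence one: "emeasure (bind P (kern f S)) UNIV = 1" using hyp by (simp add: P_def)
  have kU: "emeasure (kern f S x) UNIV = Z" for x
    by (simp add: kern_emeasure UNIV_pair_sets gv_space Z_def)
  show ?thesis
  proof (cases "Z \<le> 1")
    case True
    have "emeasure (bind P (kern f S)) UNIV = (\<integral>\<^sup>+ x. emeasure (kern f S x) UNIV \<partial>P)"
      by (rule emeasure_bind) (auto simp: sP UNIV_pair_sets intro!: kern_meas True[unfolded Z_def])
    also have "\<dots> = Z" using prob_space.emeasure_space_1[OF PP] by (simp add: kU sP)
    finally show ?thesis using one by (simp add: Z_def)
  next
    case False
    define SA where "SA = subprob_algebra (borel \<Otimes>\<^sub>M borel :: ((real^'p) \<times> (real^'n)) measure)"
    have nsub: "kern f S x \<notin> space SA" for x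
    proof
      assume "kern f S x \<in> space SA"
      hence "subprob_space (kern f S x)" by (simp add: SA_def space_subprob_algebra)
      hence "emeasure (kern f S x) (space (kern f S x)) \<le> 1" by (rule subprob_space.subprob_emeasure_le_1)
      thus False using kU[of x] False by (simp add: kern_def space_pair_measure)
    qed
    have "bind P (kern f S) = join (distr P (subprob_algebra (kern f S (SOME x. x \<in> space P))) (kern f S))"
      by (rule bind_nonempty) (simp add: sP)
    also have "subprob_algebra (kern f S (SOME x. x \<in> space P)) = SA"
      unfolding SA_def by (rule subprob_algebra_cong) (simp add: kern_def)
    also have "distr P SA (kern f S) = null_measure SA"
      by (rule distr_nonmeas_null) (rule nsub)
    finally have "emeasure (bind P (kern f S)) UNIV = emeasure (join (null_measure SA)) UNIV" by simp
    also have "\<dots> = 0"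
      by (subst emeasure_join[where N="borel \<Otimes>\<^sub>M borel"]) (auto simp: SA_def UNIV_pair_sets)
    finally show ?thesis using one by simp
  qed
qed




lemma law_X1:
  fixes X0 :: "'w \<Rightarrow> real^'p" and X1 :: "'w \<Rightarrow> real^'n" and f :: "real^'p \<Rightarrow> real^'n"
    and S :: "real^'n^'n"
  assumes M: "prob_space M" and [measurable]: "X0 \<in> borel_measurable M" "X1 \<in> borel_measurable M"
    and f[measurable]: "f \<in> borel_measurable borel"
    and hyp: "distr M (borel \<Otimes>\<^sub>M borel) (\<lambda>\<omega>. (X0 \<omega>, X1 \<omega>)) = bind (distr M borel X0) (kern f S)"
    and B: "B \<in> sets borel"
  shows "emeasure (distr M borel X1) B = (\<integral>\<^sup>+ x. emeasure (gaussian_vec (f x) S) B \<partial>distr M borel X0)"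
proof -
  have Z: "(\<integral>\<^sup>+ y. ennreal (gd S y) \<partial>lborel) = 1" by (rule gauss_norm[OF M _ _ f hyp]) simp_all
  have UB: "UNIV \<times> B \<in> sets (borel \<Otimes>\<^sub>M borel :: ((real^'p) \<times> (real^'n)) measure)"
    using B by (intro pair_measureI) auto
  have "emeasure (distr M borel X1) B = emeasure M (X1 -` B \<inter> space M)"
    using B by (simp add: emeasure_distr)
  also have "X1 -` B \<inter> space M = (\<lambda>\<omega>. (X0 \<omega>, X1 \<omega>)) -` (UNIV \<times> B) \<inter> space M" by auto
  also have "emeasure M \<dots> = emeasure (distr M (borel \<Otimes>\<^sub>M borel) (\<lambda>\<omega>. (X0 \<omega>, X1 \<omega>))) (UNIV \<times> B)"
    using UB by (simp add: emeasure_distr)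
  also have "\<dots> = emeasure (bind (distr M borel X0) (kern f S)) (UNIV \<times> B)" by (simp add: hyp)
  also have "\<dots> = (\<integral>\<^sup>+ x. emeasure (kern f S x) (UNIV \<times> B) \<partial>distr M borel X0)"
    by (rule emeasure_bind) (auto simp: UB intro!: kern_meas f Z[THEN eq_refl])
  also have "\<dots> = (\<integral>\<^sup>+ x. emeasure (gaussian_vec (f x) S) B \<partial>distr M borel X0)"
    by (simp add: kern_emeasure UB)
  finally show ?thesis .
qed

lemma coupling_bound:
  fixes g :: "real^'p \<Rightarrow> real"
  assumes \<gamma>: "\<gamma> \<in> couplings P Q" and g[measurable]: "g \<in> borel_measurable borel"
    and g01: "\<And>x. 0 \<le> g x \<and> g x \<le> 1"
    and gL: "\<And>u v. \<bar>g u - g v\<bar> \<le> c * norm (u - v)" and c: "c \<ge> 0"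
  shows "ennreal \<bar>(\<integral>x. g x \<partial>P) - (\<integral>x. g x \<partial>Q)\<bar>
     \<le> ennreal c * (\<integral>\<^sup>+ z. ennreal (norm (fst z - snd z)) \<partial>\<gamma>)"
proof -
  have pg: "prob_space \<gamma>" and sg: "sets \<gamma> = sets (borel \<Otimes>\<^sub>M borel)"
    and dP: "distr \<gamma> borel fst = P" and dQ: "distr \<gamma> borel snd = Q"
    using \<gamma> by (auto simp: couplings_def)
  interpret pg: prob_space \<gamma> by (rule pg)
  have mfst[measurable]: "fst \<in> measurable \<gamma> borel" "snd \<in> measurable \<gamma> borel"
    by (simp_all add: measurable_cong_sets[OF sg refl])
  have ig: "integrable \<gamma> (\<lambda>z. g (fst z))" "integrable \<gamma> (\<lambda>z. g (snd z))"
    using g01 by (auto intro!: pg.integrable_const_bound[where B=1])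
  have "(\<integral>x. g x \<partial>P) = (\<integral>z. g (fst z) \<partial>\<gamma>)" unfolding dP[symmetric]
    by (rule integral_distr) simp_all
  moreover have "(\<integral>x. g x \<partial>Q) = (\<integral>z. g (snd z) \<partial>\<gamma>)" unfolding dQ[symmetric]
    by (rule integral_distr) simp_all
  ultimately have "\<bar>(\<integral>x. g x \<partial>P) - (\<integral>x. g x \<partial>Q)\<bar> = \<bar>\<integral>z. g (fst z) - g (snd z) \<partial>\<gamma>\<bar>"
    using ig by simp
  also have "\<dots> \<le> (\<integral>z. \<bar>g (fst z) - g (snd z)\<bar> \<partial>\<gamma>)"
    by (rule integral_abs_bound)
  finally have "ennreal \<bar>(\<integral>x. g x \<partial>P) - (\<integral>x. g x \<partial>Q)\<bar> \<le> ennreal (\<integral>z. \<bar>g (fst z) - g (snd z)\<bar> \<partial>\<gamma>)"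
    by (rule ennreal_leI)
  also have "\<dots> = (\<integral>\<^sup>+ z. ennreal \<bar>g (fst z) - g (snd z)\<bar> \<partial>\<gamma>)"
    using ig by (intro nn_integral_eq_integral[symmetric]) auto
  also have "\<dots> \<le> (\<integral>\<^sup>+ z. ennreal c * ennreal (norm (fst z - snd z)) \<partial>\<gamma>)"
    using gL c by (intro nn_integral_mono) (simp add: ennreal_mult[symmetric])
  also have "\<dots> = ennreal c * (\<integral>\<^sup>+ z. ennreal (norm (fst z - snd z)) \<partial>\<gamma>)"
    by (rule nn_integral_cmult) simp
  finally show ?thesis .
qed




lemma prod_coupling:
  fixes P Q :: "('a::real_normed_vector) measure"
  assumes PP: "prob_space P" and QQ: "prob_space Q" and sP: "sets P = sets borel" and sQ: "sets Q = sets borel"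
  shows "P \<Otimes>\<^sub>M Q \<in> couplings P Q"
proof -
  interpret pq: pair_prob_space P Q
    by (simp add: PP QQ pair_prob_space.intro pair_sigma_finite_def prob_space_imp_sigma_finite)
  have sPQ: "sets (P \<Otimes>\<^sub>M Q) = sets (borel \<Otimes>\<^sub>M borel)"
    by (rule sets_pair_measure_cong[OF sP sQ])
  have spP: "space P = UNIV" "space Q = UNIV" using sets_eq_imp_space_eq[OF sP] sets_eq_imp_space_eq[OF sQ] by auto
  have "distr (P \<Otimes>\<^sub>M Q) borel fst = distr (P \<Otimes>\<^sub>M Q) P fst"
    by (rule distr_cong) (simp_all add: sP)
  also have "\<dots> = P" by (rule pq.M2.distr_pair_fst)
  finally have d1: "distr (P \<Otimes>\<^sub>M Q) borel fst = P" .
  have d2: "distr (P \<Otimes>\<^sub>M Q) borel snd = Q"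
  proof (rule measure_eqI)
    show "sets (distr (P \<Otimes>\<^sub>M Q) borel snd) = sets Q" by (simp add: sQ)
    fix A assume "A \<in> sets (distr (P \<Otimes>\<^sub>M Q) borel snd)"
    hence A: "A \<in> sets Q" by (simp add: sQ)
    have "emeasure (distr (P \<Otimes>\<^sub>M Q) borel snd) A = emeasure (P \<Otimes>\<^sub>M Q) (snd -` A \<inter> space (P \<Otimes>\<^sub>M Q))"
      using A sQ by (intro emeasure_distr) (auto simp: measurable_cong_sets[OF sPQ refl])
    also have "snd -` A \<inter> space (P \<Otimes>\<^sub>M Q) = space P \<times> A"
      using sets.sets_into_space[OF A] by (auto simp: space_pair_measure spP)
    also have "emeasure (P \<Otimes>\<^sub>M Q) (space P \<times> A) = emeasure P (space P) * emeasure Q A"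
      using A by (intro pq.M2.emeasure_pair_measure_Times) auto
    finally show "emeasure (distr (P \<Otimes>\<^sub>M Q) borel snd) A = emeasure Q A"
      by (simp add: pq.M1.emeasure_space_1)
  qed
  show ?thesis unfolding couplings_def using sPQ d1 d2 pq.prob_space_axioms by auto
qed

lemma tv_le:
  assumes "\<And>A. A \<in> sets \<mu> \<Longrightarrow> ennreal \<bar>measure \<mu> A - measure \<nu> A\<bar> \<le> r"
  shows "ennreal (tv_dist \<mu> \<nu>) \<le> r"
proof (cases r)
  case (real r')
  have "\<bar>measure \<mu> A - measure \<nu> A\<bar> \<le> r'" if "A \<in> sets \<mu>" for A
    using assms[OF that] real by (simp add: ennreal_le_iff)
  hence "tv_dist \<mu> \<nu> \<le> r'" unfolding tv_dist_def
    by (intro cSUP_least) auto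
  thus ?thesis using real by (simp add: ennreal_leI)
qed simp

lemma inf_step:
  fixes I :: "'g \<Rightarrow> ennreal"
  assumes le: "\<And>\<gamma>. \<gamma> \<in> G \<Longrightarrow> ennreal t \<le> ennreal c * I \<gamma>" and g0: "\<gamma>0 \<in> G" and c: "c \<ge> 0"
  shows "ennreal t \<le> ennreal c * (INF \<gamma>\<in>G. I \<gamma>)"
proof (cases "c = 0 \<or> t \<le> 0")
  case True
  thus ?thesis
  proof
    assume "c = 0" thus ?thesis using le[OF g0] by simp
  next
    assume "t \<le> 0"
    hence "ennreal t = 0" by (simp add: ennreal_eq_0_iff)
    thus ?thesis by simp
  qed
next
  case False
  hence cp: "c > 0" and tp: "t > 0" using c by auto
  have split: "ennreal t = ennreal c * ennreal (t / c)"
    using cp tp by (simp add: ennreal_mult[symmetric])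
  have "ennreal (t / c) \<le> I \<gamma>" if "\<gamma> \<in> G" for \<gamma>
    using le[OF that] cp unfolding split by (simp add: ennreal_mult_le_mult_iff)
  hence "ennreal (t / c) \<le> (INF \<gamma>\<in>G. I \<gamma>)" by (rule INF_greatest)
  thus ?thesis unfolding split by (rule mult_left_mono) simp
qed




lemma law_integral:
  fixes X0 :: "'w \<Rightarrow> real^'p" and X1 :: "'w \<Rightarrow> real^'n" and f :: "real^'p \<Rightarrow> real^'n"
    and S :: "real^'n^'n"
  assumes M: "prob_space M" and [measurable]: "X0 \<in> borel_measurable M" "X1 \<in> borel_measurable M"
    and f[measurable]: "f \<in> borel_measurable borel"
    and hyp: "distr M (borel \<Otimes>\<^sub>M borel) (\<lambda>\<omega>. (X0 \<omega>, X1 \<omega>)) = bind (distr M borel X0) (kern f S)"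
    and B: "B \<in> sets borel"
  shows "measure (distr M borel X1) B = (\<integral>x. measure (gaussian_vec (f x) S) B \<partial>distr M borel X0)"
proof -
  interpret M: prob_space M by (rule M)
  interpret P: prob_space "distr M borel X0" by (rule M.prob_space_distr) simp
  have Z: "(\<integral>\<^sup>+ y. ennreal (gd S y) \<partial>lborel) = 1" by (rule gauss_norm[OF M _ _ f hyp]) simp_all
  have UB: "UNIV \<times> B \<in> sets (borel \<Otimes>\<^sub>M borel :: ((real^'p) \<times> (real^'n)) measure)"
    using B by (intro pair_measureI) auto
  have gm: "(\<lambda>x. measure (gaussian_vec (f x) S) B) \<in> borel_measurable (distr M borel X0)"
    using gv_emeasure_pair_meas[OF f UB, of S] unfolding measure_def
    by (simp add: measurable_cong_sets[OF sets_distr refl])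
  have g01: "0 \<le> measure (gaussian_vec (f x) S) B \<and> measure (gaussian_vec (f x) S) B \<le> 1" for x
    using prob_space.prob_le_1[OF gv_prob[OF Z]] by simp
  have ig: "integrable (distr M borel X0) (\<lambda>x. measure (gaussian_vec (f x) S) B)"
    using g01 gm by (intro P.integrable_const_bound[where B=1]) auto
  have "emeasure (distr M borel X1) B = (\<integral>\<^sup>+ x. emeasure (gaussian_vec (f x) S) B \<partial>distr M borel X0)"
    by (rule law_X1[OF M _ _ f hyp B]) simp_all
  also have "\<dots> = (\<integral>\<^sup>+ x. ennreal (measure (gaussian_vec (f x) S) B) \<partial>distr M borel X0)"
    by (intro nn_integral_cong) (simp add: finite_measure.emeasure_eq_measure[OF conjunct1[OF gv_prob[OF Z, unfolded prob_space_def]]])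
  also have "\<dots> = ennreal (\<integral>x. measure (gaussian_vec (f x) S) B \<partial>distr M borel X0)"
    using ig g01 by (intro nn_integral_eq_integral) auto
  finally show ?thesis unfolding measure_def
    by (simp add: integral_nonneg_AE g01)
qed

theorem lemma1:
  fixes M :: "'w measure" and M' :: "'v measure"
    and X0 :: "'w \<Rightarrow> real^'p" and X1 :: "'w \<Rightarrow> real^'n"
    and Y0 :: "'v \<Rightarrow> real^'p" and Y1 :: "'v \<Rightarrow> real^'n"
    and f :: "real^'p \<Rightarrow> real^'n" and L :: real and \<Sigma> :: "real^'n^'n"
  assumes "prob_space M" and "prob_space M'"
    and "X0 \<in> borel_measurable M" and "X1 \<in> borel_measurable M"
    and "Y0 \<in> borel_measurable M'" and "Y1 \<in> borel_measurable M'"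
    and "absolutely_continuous lborel (distr M borel X0)"
    and "absolutely_continuous lborel (distr M' borel Y0)"
    and "L-lipschitz_on UNIV f"
    and "pos_def_mat \<Sigma>"
    and "distr M (borel \<Otimes>\<^sub>M borel) (\<lambda>\<omega>. (X0 \<omega>, X1 \<omega>)) =
           bind (distr M borel X0) (\<lambda>x. distr (gaussian_vec (f x) \<Sigma>) (borel \<Otimes>\<^sub>M borel) (\<lambda>y. (x, y)))"
    and "distr M' (borel \<Otimes>\<^sub>M borel) (\<lambda>\<omega>. (Y0 \<omega>, Y1 \<omega>)) =
           bind (distr M' borel Y0) (\<lambda>x. distr (gaussian_vec (f x) \<Sigma>) (borel \<Otimes>\<^sub>M borel) (\<lambda>y. (x, y)))"
  shows "ennreal (tv_dist (distr M borel X1) (distr M' borel Y1))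
           \<le> ennreal (L * sqrt (trace (matrix_inv \<Sigma>)) / 2)
              * wasserstein1 (distr M borel X0) (distr M' borel Y0)"
proof -
  note M = assms(1) and M' = assms(2)
  note [measurable] = assms(3-6)
  note lip = assms(9) and pd = assms(10)
  have kk: "(\<lambda>x. distr (gaussian_vec (f x) \<Sigma>) (borel \<Otimes>\<^sub>M borel) (\<lambda>y. (x, y))) = kern f \<Sigma>"
    by (simp add: kern_def fun_eq_iff)
  have hX: "distr M (borel \<Otimes>\<^sub>M borel) (\<lambda>\<omega>. (X0 \<omega>, X1 \<omega>)) = bind (distr M borel X0) (kern f \<Sigma>)"
    using assms(11) unfolding kk .
  have hY: "distr M' (borel \<Otimes>\<^sub>M borel) (\<lambda>\<omega>. (Y0 \<omega>, Y1 \<omega>)) = bind (distr M' borel Y0) (kern f \<Sigma>)"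
    using assms(12) unfolding kk .
  have f[measurable]: "f \<in> borel_measurable borel"
    by (rule borel_measurable_continuous_onI[OF lipschitz_on_continuous_on[OF lip]])
  have L0: "L \<ge> 0" by (rule lipschitz_on_nonneg[OF lip])
  have Z: "(\<integral>\<^sup>+ y. ennreal (gd \<Sigma> y) \<partial>lborel) = 1" by (rule gauss_norm[OF M _ _ f hX]) simp_all
  define c where "c = L * sqrt (trace (matrix_inv \<Sigma>)) / 2"
  have tr0: "trace (matrix_inv \<Sigma>) \<ge> 0" by (rule pd_inv_trace_nonneg[OF pd])
  have c0: "c \<ge> 0" unfolding c_def using L0 tr0 by simp
  define P where "P = distr M borel X0"
  define Q where "Q = distr M' borel Y0"
  have PP: "prob_space P" unfolding P_def by (rule prob_space.prob_space_distr[OF M]) simp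
  have QQ: "prob_space Q" unfolding Q_def by (rule prob_space.prob_space_distr[OF M']) simp
  have key: "ennreal (tv_dist (distr M borel X1) (distr M' borel Y1))
     \<le> ennreal c * (\<integral>\<^sup>+ z. ennreal (norm (fst z - snd z)) \<partial>\<gamma>)" if \<gamma>: "\<gamma> \<in> couplings P Q" for \<gamma>
  proof (rule tv_le)
    fix B assume "B \<in> sets (distr M borel X1)"
    hence B: "B \<in> sets borel" by simp
    define g where "g = (\<lambda>x. measure (gaussian_vec (f x) \<Sigma>) B)"
    have UB: "UNIV \<times> B \<in> sets (borel \<Otimes>\<^sub>M borel :: ((real^'p) \<times> (real^'n)) measure)"
      using B by (intro pair_measureI) auto
    have gm: "g \<in> borel_measurable borel"
      using gv_emeasure_pair_meas[OF f UB, of \<Sigma>] unfolding measure_def g_def by simp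
    have g01: "0 \<le> g x \<and> g x \<le> 1" for x
      using prob_space.prob_le_1[OF gv_prob[OF Z]] by (simp add: g_def)
    have gL: "\<bar>g u - g v\<bar> \<le> c * norm (u - v)" for u v
    proof -
      have "\<bar>g u - g v\<bar> \<le> sqrt (trace (matrix_inv \<Sigma>)) / 2 * norm (f u - f v)"
        unfolding g_def by (rule gauss_tv[OF pd Z B])
      also have "norm (f u - f v) \<le> L * norm (u - v)"
        using lipschitz_onD[OF lip, of u v] by (simp add: dist_norm)
      hence "sqrt (trace (matrix_inv \<Sigma>)) / 2 * norm (f u - f v) \<le> sqrt (trace (matrix_inv \<Sigma>)) / 2 * (L * norm (u - v))"
        using tr0 by (intro mult_left_mono) auto
      finally show ?thesis by (simp add: c_def algebra_simps)
    qed
    have e1: "measure (distr M borel X1) B = (\<integral>x. g x \<partial>P)"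
      unfolding g_def P_def by (rule law_integral[OF M _ _ f hX B]) simp_all
    have e2: "measure (distr M' borel Y1) B = (\<integral>x. g x \<partial>Q)"
      unfolding g_def Q_def by (rule law_integral[OF M' _ _ f hY B]) simp_all
    show "ennreal \<bar>measure (distr M borel X1) B - measure (distr M' borel Y1) B\<bar>
       \<le> ennreal c * (\<integral>\<^sup>+ z. ennreal (norm (fst z - snd z)) \<partial>\<gamma>)"
      unfolding e1 e2 by (rule coupling_bound[OF \<gamma> gm g01 gL c0])
  qed
  have g0: "P \<Otimes>\<^sub>M Q \<in> couplings P Q"
    by (rule prod_coupling[OF PP QQ]) (simp_all add: P_def Q_def)
  have "ennreal (tv_dist (distr M borel X1) (distr M' borel Y1))
     \<le> ennreal c * (INF \<gamma>\<in>couplings P Q. \<integral>\<^sup>+ z. ennreal (norm (fst z - snd z)) \<partial>\<gamma>)"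
    by (rule inf_step[OF key g0 c0])
  thus ?thesis by (simp add: c_def wasserstein1_def P_def Q_def)
qed


end
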